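(* Let $G$ be a finite abelian group and let $\sigma_1,\sigma_2,\tau\in G$ be non-trivial elements with $o(\tau)>2$ and $\tau\in\langle\sigma_1,\sigma_2\rangle$. Then: (1) if $\mathrm{rank}\langle\sigma_1,\sigma_2\rangle=2$, there exist characters $\phi_1,\phi_2,\chi\in G^*$ such that (i) $\chi(\tau)\neq1$; (ii) $\phi_1(\sigma_1)\neq1$, $\phi_2(\sigma_2)\neq1$ and $\phi_1(\sigma_2)=\phi_2(\sigma_1)=1$; (iii) $\phi_1(\sigma_1)\chi(\sigma_1)\neq1$ and $\phi_2(\sigma_2)\overline{\chi}(\sigma_2)\neq1$. (2) If $\mathrm{rank}\langle\sigma_1,\sigma_2\rangle=1$, there exist characters $\phi,\chi\in G^*$ such that (i) $\chi(\tau)\neq1$; (ii) $\phi(\sigma_i)\neq1$ for $i=1,2$; (iii) $\phi(\sigma_i)\chi(\sigma_i)\neq1$ for $i=1,2$.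
   Context: $G^*$ is the group of characters $G\to\mathbb{C}^*$; $o(g)$ is the order of $g$; the rank of an abelian group is the minimal number of its generators. *)

theory Defs
  imports Complex_Main "HOL-Algebra.Algebra"
begin

text \<open>A character of G: a homomorphism from G to the multiplicative group of
nonzero complex numbers (values outside the carrier are irrelevant).\<close>
definition character :: "('a, 'b) monoid_scheme \<Rightarrow> ('a \<Rightarrow> complex) \<Rightarrow> bool" where
  "character G \<chi> \<longleftrightarrow>
     (\<forall>x\<in>carrier G. \<chi> x \<noteq> 0) \<and>
     (\<forall>x\<in>carrier G. \<forall>y\<in>carrier G. \<chi> (x \<otimes>\<^bsub>G\<^esub> y) = \<chi> x * \<chi> y)"

definition group_rank :: "('a, 'b) monoid_scheme \<Rightarrow> 'a set \<Rightarrow> nat" where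
  "group_rank G H = (LEAST n. \<exists>S. S \<subseteq> H \<and> finite S \<and> card S = n \<and> generate G S = H)"

end

theory Submission imports Defs begin

definition char_on :: "('a, 'b) monoid_scheme \<Rightarrow> 'a set \<Rightarrow> ('a \<Rightarrow> complex) \<Rightarrow> bool" where
  "char_on G K \<psi> \<longleftrightarrow> (\<forall>x\<in>K. \<psi> x \<noteq> 0) \<and> (\<forall>x\<in>K. \<forall>y\<in>K. \<psi> (x \<otimes>\<^bsub>G\<^esub> y) = \<psi> x * \<psi> y)"

definition Kext :: "('a, 'b) monoid_scheme \<Rightarrow> 'a set \<Rightarrow> 'a \<Rightarrow> nat \<Rightarrow> 'a set" where
  "Kext G K g m = {k \<otimes>\<^bsub>G\<^esub> g [^]\<^bsub>G\<^esub> j | k j. k \<in> K \<and> j < m}"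

context comm_group begin

lemma Kext_unique:
  assumes K: "subgroup K G" and g: "g \<in> carrier G"
    and min: "\<forall>j::nat. 0 < j \<and> j < m \<longrightarrow> g [^] j \<notin> K"
    and k1: "k1 \<in> K" and k2: "k2 \<in> K" and i: "(i::nat) < m" and j: "j < m"
    and eq: "k1 \<otimes> g [^] i = k2 \<otimes> g [^] j"
  shows "i = j \<and> k1 = k2"
proof -
  have c1: "k1 \<in> carrier G" "k2 \<in> carrier G" using K k1 k2 subgroup.subset by auto
  have main: "i = j \<and> k1 = k2" if le: "i \<le> j" and k1: "k1 \<in> K" and k2: "k2 \<in> K"
     and j: "j < m" and eq: "k1 \<otimes> g [^] i = k2 \<otimes> g [^] j" for i j k1 k2
  proof -
    have c: "k1 \<in> carrier G" "k2 \<in> carrier G" using K k1 k2 subgroup.subset by auto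
    have "g [^] j = g [^] (j - i) \<otimes> g [^] i" using le g by (simp add: nat_pow_mult)
    hence "k1 \<otimes> g [^] i = (k2 \<otimes> g [^] (j - i)) \<otimes> g [^] i" using eq c g by (simp add: m_assoc)
    hence e: "k1 = k2 \<otimes> g [^] (j - i)" using c g by (metis m_closed nat_pow_closed r_cancel)
    hence "g [^] (j - i) = inv k2 \<otimes> k1" using c g by (metis l_inv m_assoc inv_closed nat_pow_closed l_one)
    hence "g [^] (j - i) \<in> K" using K k1 k2 by (simp add: subgroup.m_closed subgroup.m_inv_closed)
    hence "j - i = 0" using min j by (meson diff_le_self le_less_trans not_gr0)
    hence "i = j" using le by simp
    with e c show ?thesis by simp
  qed
  show ?thesis
  proof (cases "i \<le> j")
    case True then show ?thesis using main k1 k2 j eq by blast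
  next
    case False then show ?thesis using main[of j i k2 k1] k1 k2 i eq by auto
  qed
qed

lemma Kext_subgroup:
  assumes K: "subgroup K G" and g: "g \<in> carrier G" and m: "(m::nat) > 0" and gm: "g [^] m \<in> K"
  shows "subgroup (Kext G K g m) G"
proof (rule subgroupI)
  have KC: "\<And>k. k \<in> K \<Longrightarrow> k \<in> carrier G" using K subgroup.subset by auto
  show "Kext G K g m \<subseteq> carrier G" unfolding Kext_def using KC g by auto
  show "Kext G K g m \<noteq> {}" unfolding Kext_def using m subgroup.one_closed[OF K] by auto
  show "inv a \<in> Kext G K g m" if "a \<in> Kext G K g m" for a
  proof -
    obtain k j where a: "a = k \<otimes> g [^] j" "k \<in> K" "j < m" using \<open>a \<in> _\<close> unfolding Kext_def by auto
    show ?thesis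
    proof (cases "j = 0")
      case True
      then have "inv a = inv k \<otimes> g [^] (0::nat)" using a KC by simp
      then show ?thesis unfolding Kext_def using a m K subgroup.m_inv_closed by fastforce
    next
      case False
      have "inv a = (inv k \<otimes> inv (g [^] m)) \<otimes> g [^] (m - j)"
      proof -
        have "g [^] m = g [^] j \<otimes> g [^] (m - j)" using a g by (simp add: nat_pow_mult)
        then show ?thesis using a KC g
          by (simp add: inv_mult_group m_ac)
      qed
      moreover have "inv k \<otimes> inv (g [^] m) \<in> K" using a gm K subgroup.m_inv_closed subgroup.m_closed by metis
      ultimately show ?thesis unfolding Kext_def using False a by fastforce
    qed
  qed
  show "a \<otimes> b \<in> Kext G K g m" if "a \<in> Kext G K g m" "b \<in> Kext G K g m" for a b
  proof -
    obtain k j where a: "a = k \<otimes> g [^] j" "k \<in> K" "j < m" using \<open>a \<in> Kext G K g m\<close> unfolding Kext_def by auto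
    obtain k' j' where b: "b = k' \<otimes> g [^] j'" "k' \<in> K" "j' < m" using \<open>b \<in> Kext G K g m\<close> unfolding Kext_def by auto
    have ab: "a \<otimes> b = (k \<otimes> k') \<otimes> g [^] (j + j')" using a b KC g by (simp add: m_ac nat_pow_mult[symmetric])
    have kk: "k \<otimes> k' \<in> K" using a b K subgroup.m_closed by metis
    show ?thesis
    proof (cases "j + j' < m")
      case True then show ?thesis unfolding Kext_def using ab kk by blast
    next
      case False
      have "a \<otimes> b = (k \<otimes> k' \<otimes> g [^] m) \<otimes> g [^] (j + j' - m)"
        using ab False KC a b g by (simp add: m_assoc nat_pow_mult)
      moreover have "k \<otimes> k' \<otimes> g [^] m \<in> K" using kk gm K subgroup.m_closed by metis
      moreover have "j + j' - m < m" using a b by simp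
      ultimately show ?thesis unfolding Kext_def by blast
    qed
  qed
qed

lemma Kext_char:
  assumes K: "subgroup K G" and psi: "char_on G K \<psi>" and g: "g \<in> carrier G" and m: "(m::nat) > 0"
    and gm: "g [^] m \<in> K" and min: "\<forall>j::nat. 0 < j \<and> j < m \<longrightarrow> g [^] j \<notin> K"
    and w: "w ^ m = \<psi> (g [^] m)"
  shows "\<exists>\<psi>'. char_on G (Kext G K g m) \<psi>' \<and> (\<forall>k\<in>K. \<forall>j<m. \<psi>' (k \<otimes> g [^] j) = \<psi> k * w ^ j)"
proof -
  have KC: "\<And>k. k \<in> K \<Longrightarrow> k \<in> carrier G" using K subgroup.subset by auto
  define P where "P x p \<longleftrightarrow> fst p \<in> K \<and> snd p < m \<and> x = fst p \<otimes> g [^] (snd p)" for x p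
  define \<psi>' where "\<psi>' x = \<psi> (fst (SOME p. P x p)) * w ^ (snd (SOME p. P x p))" for x
  have key: "\<psi>' (k \<otimes> g [^] j) = \<psi> k * w ^ j" if k: "k \<in> K" and j: "j < m" for k j
  proof -
    have "P (k \<otimes> g [^] j) (k, j)" using k j by (simp add: P_def)
    hence "P (k \<otimes> g [^] j) (SOME p. P (k \<otimes> g [^] j) p)" by (rule someI)
    moreover obtain a b where ab: "(SOME p. P (k \<otimes> g [^] j) p) = (a, b)" by fastforce
    ultimately have "a \<in> K" "b < m" "k \<otimes> g [^] j = a \<otimes> g [^] b" by (auto simp: P_def)
    with Kext_unique[OF K g min k \<open>a \<in> K\<close> j \<open>b < m\<close>] have "k = a" "j = b" by auto
    hence "(SOME p. P (k \<otimes> g [^] j) p) = (k, j)" using ab by simp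
    thus ?thesis by (simp add: \<psi>'_def)
  qed
  have psi0: "\<psi> k \<noteq> 0" if "k \<in> K" for k using psi that by (simp add: char_on_def)
  have psim: "\<psi> (a \<otimes> b) = \<psi> a * \<psi> b" if "a \<in> K" "b \<in> K" for a b using psi that by (simp add: char_on_def)
  have w0: "w \<noteq> 0" using w m psi0[OF gm] by (metis power_0_left less_not_refl)
  have "char_on G (Kext G K g m) \<psi>'"
    unfolding char_on_def
  proof (intro conjI ballI)
    fix x assume "x \<in> Kext G K g m"
    then obtain k j where x: "x = k \<otimes> g [^] j" "k \<in> K" "j < m" unfolding Kext_def by auto
    show "\<psi>' x \<noteq> 0" using key[OF x(2,3)] x psi0 w0 by simp
  next
    fix a b assume "a \<in> Kext G K g m" "b \<in> Kext G K g m"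
    then obtain k j k' j' where a: "a = k \<otimes> g [^] j" "k \<in> K" "j < m"
      and b: "b = k' \<otimes> g [^] j'" "k' \<in> K" "j' < m" unfolding Kext_def by auto
    have ab: "a \<otimes> b = (k \<otimes> k') \<otimes> g [^] (j + j')" using a b KC g by (simp add: m_ac nat_pow_mult[symmetric])
    have kk: "k \<otimes> k' \<in> K" using a b K subgroup.m_closed by metis
    show "\<psi>' (a \<otimes> b) = \<psi>' a * \<psi>' b"
    proof (cases "j + j' < m")
      case True
      have "\<psi>' (a \<otimes> b) = \<psi> (k \<otimes> k') * w ^ (j + j')" using ab key[OF kk True] by simp
      also have "\<dots> = (\<psi> k * w ^ j) * (\<psi> k' * w ^ j')" using psim[OF a(2) b(2)] by (simp add: power_add mult_ac)
      finally show ?thesis using key[OF a(2,3)] key[OF b(2,3)] a(1) b(1) by simp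
    next
      case False
      have e: "a \<otimes> b = (k \<otimes> k' \<otimes> g [^] m) \<otimes> g [^] (j + j' - m)"
        using ab False KC a b g by (simp add: m_assoc nat_pow_mult)
      have kk2: "k \<otimes> k' \<otimes> g [^] m \<in> K" using kk gm K subgroup.m_closed by metis
      have lt: "j + j' - m < m" using a b by simp
      have "\<psi>' (a \<otimes> b) = \<psi> k * \<psi> k' * w ^ m * w ^ (j + j' - m)"
        using key[OF kk2 lt] e psim[OF kk gm] psim[OF a(2) b(2)] w by (simp only:)
      also have "\<dots> = \<psi> k * \<psi> k' * w ^ (j + j')"
        using False by (simp add: mult.assoc power_add[symmetric])
      finally show ?thesis using key[OF a(2,3)] key[OF b(2,3)] a(1) b(1) by (simp add: power_add mult_ac)
    qed
  qed
  then show ?thesis using key by blast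
qed

lemma complex_root_exists:
  fixes z :: complex assumes "n > 0" shows "\<exists>w. w ^ n = z"
proof -
  have "z = rcis (cmod z) (Arg z)" by (simp add: rcis_cmod_Arg)
  moreover have "(rcis (root n (cmod z)) (Arg z / n)) ^ n = rcis (cmod z) (Arg z)"
    using assms by (simp add: DeMoivre2 real_root_pow_pos2)
  ultimately show ?thesis by metis
qed

lemma Kext_props:
  assumes K: "subgroup K G" and g: "g \<in> carrier G" "g \<notin> K" and fin: "finite (carrier G)"
  defines "m \<equiv> LEAST j::nat. 0 < j \<and> g [^] j \<in> K"
  shows "0 < m" "g [^] m \<in> K" "\<forall>j::nat. 0 < j \<and> j < m \<longrightarrow> g [^] j \<notin> K" "m \<noteq> 1"
proof -
  have ex: "0 < ord g \<and> g [^] ord g \<in> K" using ord_ge_1[OF fin g(1)] g subgroup.one_closed[OF K] by simp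
  show "0 < m" "g [^] m \<in> K" using LeastI[of "\<lambda>j. 0 < j \<and> g [^] j \<in> K", OF ex] by (auto simp: m_def)
  show "\<forall>j::nat. 0 < j \<and> j < m \<longrightarrow> g [^] j \<notin> K" using not_less_Least[of _ "\<lambda>j. 0 < j \<and> g [^] j \<in> K"]
    by (auto simp: m_def)
  show "m \<noteq> 1" using \<open>g [^] m \<in> K\<close> g by auto
qed

lemma char_extend:
  assumes fin: "finite (carrier G)" and K: "subgroup K G" and psi: "char_on G K \<psi>"
  shows "\<exists>\<chi>. character G \<chi> \<and> (\<forall>x\<in>K. \<chi> x = \<psi> x)"
proof -
  have "\<forall>K \<psi>. card (carrier G - K) = n \<longrightarrow> subgroup K G \<longrightarrow> char_on G K \<psi> \<longrightarrow> (\<exists>\<chi>. character G \<chi> \<and> (\<forall>x\<in>K. \<chi> x = \<psi> x))" for n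
  proof (induction n rule: less_induct)
    case (less n)
    show ?case
    proof (intro allI impI)
      fix K \<psi> assume n: "card (carrier G - K) = n" and K: "subgroup K G" and psi: "char_on G K \<psi>"
      show "\<exists>\<chi>. character G \<chi> \<and> (\<forall>x\<in>K. \<chi> x = \<psi> x)"
      proof (cases "carrier G - K = {}")
        case True
        hence "K = carrier G" using subgroup.subset[OF K] by auto
        thus ?thesis using psi by (auto simp: character_def char_on_def)
      next
        case False
        then obtain g where g: "g \<in> carrier G" "g \<notin> K" by auto
        define m where "m = (LEAST j::nat. 0 < j \<and> g [^] j \<in> K)"
        note mp = Kext_props[OF K g fin, folded m_def]
        obtain w where w: "w ^ m = \<psi> (g [^] m)" using complex_root_exists mp(1) by blast
        obtain \<psi>' where psi': "char_on G (Kext G K g m) \<psi>'" "\<forall>k\<in>K. \<forall>j<m. \<psi>' (k \<otimes> g [^] j) = \<psi> k * w ^ j"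
          using Kext_char[OF K psi g(1) mp(1) mp(2) mp(3) w] by blast
        have K': "subgroup (Kext G K g m) G" using Kext_subgroup[OF K g(1) mp(1) mp(2)] .
        have KC: "\<And>k. k \<in> K \<Longrightarrow> k \<in> carrier G" using K subgroup.subset by auto
        have sub: "K \<subseteq> Kext G K g m"
        proof
          fix k assume k: "k \<in> K"
          hence "k = k \<otimes> g [^] (0::nat)" using KC by simp
          thus "k \<in> Kext G K g m" unfolding Kext_def using k mp(1) by blast
        qed
        have gK': "g \<in> Kext G K g m"
        proof -
          have "g = \<one> \<otimes> g [^] (1::nat)" using g by simp
          moreover have "(1::nat) < m" using mp(1) mp(4) by linarith
          ultimately show ?thesis unfolding Kext_def using subgroup.one_closed[OF K] by blast
        qed
        have ext: "\<forall>x\<in>K. \<psi>' x = \<psi> x"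
        proof
          fix k assume k: "k \<in> K"
          hence "k = k \<otimes> g [^] (0::nat)" using KC by simp
          thus "\<psi>' k = \<psi> k" using psi'(2) k mp(1) by (metis mult.right_neutral power_0)
        qed
        have "card (carrier G - Kext G K g m) < card (carrier G - K)"
          using sub gK' g fin by (intro psubset_card_mono) auto
        then obtain \<chi> where "character G \<chi>" "\<forall>x\<in>Kext G K g m. \<chi> x = \<psi>' x"
          using less.IH n K' psi'(1) by blast
        thus ?thesis using ext sub by (metis subsetD)
      qed
    qed
  qed
  thus ?thesis using K psi by blast
qed

end

definition zeta :: "nat \<Rightarrow> complex" where "zeta n = cis (2 * pi / real n)"

lemma zeta_pow: "zeta n ^ k = cis (2 * pi * real k / real n)"
  by (simp add: zeta_def DeMoivre mult_ac)

lemma zeta_pow_n: "n > 0 \<Longrightarrow> zeta n ^ n = 1"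
  using bij_betw_roots_unity[of n] by (auto simp: zeta_pow bij_betw_def)

lemma zeta_pow_ne1: assumes "0 < k" "k < n" shows "zeta n ^ k \<noteq> 1"
proof
  assume "zeta n ^ k = 1"
  hence "cis (2 * pi * real k / real n) = cis (2 * pi * real 0 / real n)" by (simp add: zeta_pow)
  with bij_betw_roots_unity[of n] assms have "k = 0"
    unfolding bij_betw_def inj_on_def by (metis lessThan_iff order.strict_trans)
  with assms show False by simp
qed

context comm_group begin

lemma char_on_one: "subgroup K G \<Longrightarrow> char_on G K \<psi> \<Longrightarrow> \<psi> \<one> = 1"
proof -
  assume K: "subgroup K G" and p: "char_on G K \<psi>"
  have o: "\<one> \<in> K" using K subgroup.one_closed by blast
  hence "\<psi> \<one> = \<psi> \<one> * \<psi> \<one>" using p unfolding char_on_def by (metis l_one one_closed)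
  moreover have "\<psi> \<one> \<noteq> 0" using p o unfolding char_on_def by blast
  ultimately show ?thesis by (metis mult_cancel_left1)
qed

lemma character_on: "character G \<chi> \<longleftrightarrow> char_on G (carrier G) \<chi>"
  by (simp add: character_def char_on_def)

lemma char_one: "character G \<chi> \<Longrightarrow> \<chi> \<one> = 1"
  using char_on_one[of "carrier G"] subgroup_self by (simp add: character_on)

lemma char_mult: "character G \<chi> \<Longrightarrow> x \<in> carrier G \<Longrightarrow> y \<in> carrier G \<Longrightarrow> \<chi> (x \<otimes> y) = \<chi> x * \<chi> y"
  by (simp add: character_def)

lemma char_nz: "character G \<chi> \<Longrightarrow> x \<in> carrier G \<Longrightarrow> \<chi> x \<noteq> 0"
  by (simp add: character_def)

lemma char_pow: "character G \<chi> \<Longrightarrow> x \<in> carrier G \<Longrightarrow> \<chi> (x [^] (n::nat)) = \<chi> x ^ n"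
  by (induction n) (simp_all add: char_one char_mult mult.commute)

lemma char_norm: assumes fin: "finite (carrier G)" and c: "character G \<chi>" and x: "x \<in> carrier G"
  shows "cmod (\<chi> x) = 1"
proof -
  have "\<chi> x ^ ord x = 1" by (metis char_pow[OF c x] pow_ord_eq_1[OF x] char_one[OF c])
  hence "cmod (\<chi> x) ^ ord x = 1" by (simp add: norm_power[symmetric])
  moreover have "ord x > 0" using ord_ge_1[OF fin x] by simp
  ultimately show ?thesis using power_eq_imp_eq_base[of "cmod (\<chi> x)" "ord x" 1] by simp
qed

lemma char_cnj: assumes fin: "finite (carrier G)" and c: "character G \<chi>" and x: "x \<in> carrier G"
  shows "cnj (\<chi> x) = 1 / \<chi> x"
proof -
  have "\<chi> x * cnj (\<chi> x) = 1" using complex_norm_square[of "\<chi> x"] char_norm[OF fin c x] by simp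
  thus ?thesis using char_nz[OF c x] by (simp add: field_simps)
qed

lemma char_inverse: "character G \<chi> \<Longrightarrow> character G (\<lambda>x. 1 / \<chi> x)"
  by (simp add: character_def)

lemma char_square: "character G \<chi> \<Longrightarrow> character G (\<lambda>x. \<chi> x * \<chi> x)"
  by (simp add: character_def)

lemma sq_pow: "x \<in> carrier G \<Longrightarrow> x [^] (2::nat) = x \<otimes> x"
  by (simp add: numeral_2_eq_2)

lemma ext_value:
  assumes fin: "finite (carrier G)" and K: "subgroup K G" and psi: "char_on G K \<psi>"
    and g: "g \<in> carrier G" "g \<notin> K"
    and w: "w ^ (LEAST j::nat. 0 < j \<and> g [^] j \<in> K) = \<psi> (g [^] (LEAST j::nat. 0 < j \<and> g [^] j \<in> K))"
  shows "\<exists>\<chi>. character G \<chi> \<and> (\<forall>k\<in>K. \<forall>j < (LEAST j::nat. 0 < j \<and> g [^] j \<in> K). \<chi> (k \<otimes> g [^] j) = \<psi> k * w ^ j)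
     \<and> (\<forall>k\<in>K. \<chi> k = \<psi> k) \<and> \<chi> g = w"
proof -
  define m where "m = (LEAST j::nat. 0 < j \<and> g [^] j \<in> K)"
  note mp = Kext_props[OF K g fin, folded m_def]
  obtain \<psi>' where psi': "char_on G (Kext G K g m) \<psi>'" "\<forall>k\<in>K. \<forall>j<m. \<psi>' (k \<otimes> g [^] j) = \<psi> k * w ^ j"
    using Kext_char[OF K psi g(1) mp(1) mp(2) mp(3)] w unfolding m_def by blast
  have K': "subgroup (Kext G K g m) G" using Kext_subgroup[OF K g(1) mp(1) mp(2)] .
  obtain \<chi> where chi: "character G \<chi>" "\<forall>x\<in>Kext G K g m. \<chi> x = \<psi>' x"
    using char_extend[OF fin K' psi'(1)] by blast
  have KC: "\<And>k. k \<in> K \<Longrightarrow> k \<in> carrier G" using K subgroup.subset by auto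
  have A: "\<forall>k\<in>K. \<forall>j < m. \<chi> (k \<otimes> g [^] j) = \<psi> k * w ^ j"
  proof (intro ballI allI impI)
    fix k j assume kj: "k \<in> K" "j < m"
    hence "k \<otimes> g [^] j \<in> Kext G K g m" unfolding Kext_def by blast
    thus "\<chi> (k \<otimes> g [^] j) = \<psi> k * w ^ j" using chi(2) psi'(2) kj by simp
  qed
  have B: "\<forall>k\<in>K. \<chi> k = \<psi> k"
  proof
    fix k assume k: "k \<in> K"
    hence "k = k \<otimes> g [^] (0::nat)" using KC by simp
    thus "\<chi> k = \<psi> k" using A k mp(1) by (metis mult.right_neutral power_0)
  qed
  have "g = \<one> \<otimes> g [^] (1::nat)" using g by simp
  moreover have "(1::nat) < m" using mp(1) mp(4) by linarith
  ultimately have "\<chi> g = \<psi> \<one> * w" using A subgroup.one_closed[OF K] by (metis power_one_right)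
  hence "\<chi> g = w" using char_on_one[OF K psi] by simp
  thus ?thesis using A B chi(1) unfolding m_def by blast
qed

lemma char_on_const1: "char_on G K (\<lambda>_. 1)"
  by (simp add: char_on_def)

lemma faithful:
  assumes fin: "finite (carrier G)" and g: "g \<in> carrier G"
  shows "\<exists>\<chi>. character G \<chi> \<and> (\<forall>x\<in>generate G {g}. \<chi> x = 1 \<longrightarrow> x = \<one>)"
proof (cases "g = \<one>")
  case True
  have "generate G {g} \<subseteq> {\<one>}" using True generate_subgroup_incl[OF _ triv_subgroup] by simp
  moreover have "character G (\<lambda>_. 1)" by (simp add: character_def)
  ultimately show ?thesis by blast
next
  case False
  hence g1: "g \<notin> {\<one>}" by simp
  define m where "m = (LEAST j::nat. 0 < j \<and> g [^] j \<in> {\<one>})"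
  note mp = Kext_props[OF triv_subgroup g g1 fin, folded m_def]
  have "zeta m ^ m = 1" using zeta_pow_n mp(1) by simp
  then obtain \<chi> where chi: "character G \<chi>" "\<forall>k\<in>{\<one>}. \<forall>j<m. \<chi> (k \<otimes> g [^] j) = 1 * zeta m ^ j"
    using ext_value[OF fin triv_subgroup char_on_const1 g g1, of "zeta m"] unfolding m_def by auto
  have "generate G {g} \<subseteq> Kext G {\<one>} g m"
  proof (rule generate_subgroup_incl)
    show "subgroup (Kext G {\<one>} g m) G" using Kext_subgroup[OF triv_subgroup g mp(1) mp(2)] .
    have "g = \<one> \<otimes> g [^] (1::nat)" using g by simp
    moreover have "(1::nat) < m" using mp(1) mp(4) by linarith
    ultimately show "{g} \<subseteq> Kext G {\<one>} g m" unfolding Kext_def by blast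
  qed
  moreover have "x = \<one>" if xK: "x \<in> Kext G {\<one>} g m" and x1: "\<chi> x = 1" for x
  proof -
    obtain j where j: "x = \<one> \<otimes> g [^] j" "j < m" using xK unfolding Kext_def by force
    hence "zeta m ^ j = 1" using chi(2) x1 by simp
    hence "j = 0" using zeta_pow_ne1[of j m] j(2) by auto
    thus ?thesis using j g by simp
  qed
  ultimately show ?thesis using chi(1) by blast
qed

lemma phi_exists:
  assumes fin: "finite (carrier G)" and K: "subgroup K G" and g: "g \<in> carrier G" "g \<notin> K"
    and c: "g \<otimes> g \<in> K \<Longrightarrow> c \<noteq> -1"
  shows "\<exists>\<phi>. character G \<phi> \<and> (\<forall>x\<in>K. \<phi> x = 1) \<and> \<phi> g \<noteq> 1 \<and> \<phi> g \<noteq> c"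
proof -
  define m where "m = (LEAST j::nat. 0 < j \<and> g [^] j \<in> K)"
  note mp = Kext_props[OF K g fin, folded m_def]
  obtain w where w: "w ^ m = 1" "w \<noteq> 1" "w \<noteq> c"
  proof (cases "m = 2")
    case True
    hence "g \<otimes> g \<in> K" using mp(2) sq_pow g by simp
    hence "c \<noteq> -1" using c by simp
    moreover have "(-1::complex) ^ m = 1" using True by simp
    ultimately show ?thesis using that[of "-1"] by simp
  next
    case False
    hence m3: "2 < m" using mp(1) mp(4) by linarith
    have z1: "zeta m ^ m = 1" using zeta_pow_n mp(1) by simp
    have z2: "(zeta m ^ 2) ^ m = 1" using z1 by (metis power_mult power_mult_distrib mult.commute power_one)
    have n1: "zeta m ^ 1 \<noteq> 1" "zeta m ^ 2 \<noteq> 1" using zeta_pow_ne1[of 1 m] zeta_pow_ne1[of 2 m] m3 by auto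
    have "zeta m \<noteq> zeta m ^ 2"
    proof
      assume "zeta m = zeta m ^ 2"
      moreover have "zeta m \<noteq> 0" using z1 mp(1) by (metis power_0_left less_not_refl zero_neq_one)
      ultimately have "zeta m = 1" by (simp add: power2_eq_square)
      thus False using n1 by simp
    qed
    then show ?thesis
    proof (cases "zeta m = c")
      case True then show ?thesis using that[of "zeta m ^ 2"] z2 n1 \<open>zeta m \<noteq> zeta m ^ 2\<close> by simp
    next
      case False then show ?thesis using that[of "zeta m"] z1 n1 by simp
    qed
  qed
  obtain \<chi> where "character G \<chi>" "\<forall>k\<in>K. \<chi> k = 1" "\<chi> g = w"
    using ext_value[OF fin K char_on_const1 g, of w] w(1) unfolding m_def by auto
  thus ?thesis using w by blast
qed

end


context comm_group begin

lemma sq_subgroup: "subgroup {x \<in> carrier G. x \<otimes> x = \<one>} G"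
proof (rule subgroupI)
  show "{x \<in> carrier G. x \<otimes> x = \<one>} \<noteq> {}" by auto
  show "inv a \<in> {x \<in> carrier G. x \<otimes> x = \<one>}" if "a \<in> {x \<in> carrier G. x \<otimes> x = \<one>}" for a
    using that by (metis (mono_tags, lifting) inv_closed inv_mult_group inv_one mem_Collect_eq)
  show "a \<otimes> b \<in> {x \<in> carrier G. x \<otimes> x = \<one>}" if "a \<in> {x \<in> carrier G. x \<otimes> x = \<one>}" "b \<in> {x \<in> carrier G. x \<otimes> x = \<one>}" for a b
  proof -
    have "(a \<otimes> b) \<otimes> (a \<otimes> b) = (a \<otimes> a) \<otimes> (b \<otimes> b)" using that by (simp add: m_ac)
    thus ?thesis using that by simp
  qed
qed auto

lemma gen_sq: assumes "a \<in> carrier G" "b \<in> carrier G" "a \<otimes> a = \<one>" "b \<otimes> b = \<one>" "x \<in> generate G {a, b}"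
  shows "x \<otimes> x = \<one>"
  using generate_subgroup_incl[OF _ sq_subgroup, of "{a, b}"] assms by auto

lemma gen1_sq: assumes "a \<in> carrier G" "a \<otimes> a = \<one>" "x \<in> generate G {a}"
  shows "x \<otimes> x = \<one>"
  using gen_sq[of a a] assms by simp

lemma gen_order2: assumes b: "b \<in> carrier G" "b \<otimes> b = \<one>" shows "generate G {b} \<subseteq> {\<one>, b}"
proof (rule generate_subgroup_incl)
  show "{b} \<subseteq> {\<one>, b}" by auto
  have ib: "inv b = b" using b inv_equality by blast
  show "subgroup {\<one>, b} G"
    by (rule subgroupI) (use b ib in auto)
qed

lemma gen_mem: "a \<in> carrier G \<Longrightarrow> a \<in> generate G {a}"
  by (simp add: generate.incl)

lemma gen_sqmem: "a \<in> carrier G \<Longrightarrow> a \<otimes> a \<in> generate G {a}"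
  by (simp add: generate.incl generate.eng)

lemma gen_sub: "a \<in> carrier G \<Longrightarrow> subgroup (generate G {a}) G"
  by (simp add: generate_is_subgroup)

lemma half:
  assumes fin: "finite (carrier G)" and a: "a \<in> carrier G" and t: "\<tau> \<in> carrier G" "\<tau> \<otimes> \<tau> \<noteq> \<one>"
  shows "\<exists>\<chi>. character G \<chi> \<and> \<chi> \<tau> \<noteq> 1 \<and> \<chi> a \<noteq> -1"
proof (cases "\<tau> \<in> generate G {a}")
  case True
  obtain \<chi> where chi: "character G \<chi>" "\<forall>x\<in>generate G {a}. \<chi> x = 1 \<longrightarrow> x = \<one>"
    using faithful[OF fin a] by blast
  have "\<tau> \<noteq> \<one>" using t by auto
  hence "\<chi> \<tau> \<noteq> 1" using chi True by blast
  moreover have "\<chi> a \<noteq> -1"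
  proof
    assume "\<chi> a = -1"
    hence "\<chi> (a \<otimes> a) = 1" using char_mult[OF chi(1) a a] by simp
    hence "a \<otimes> a = \<one>" using chi(2) gen_sqmem[OF a] by blast
    thus False using gen1_sq[OF a _ True] t by simp
  qed
  ultimately show ?thesis using chi(1) by blast
next
  case False
  obtain \<chi> where "character G \<chi>" "\<forall>x\<in>generate G {a}. \<chi> x = 1" "\<chi> \<tau> \<noteq> 1"
    using phi_exists[OF fin gen_sub[OF a] t(1) False, of 0] by auto
  thus ?thesis using gen_mem[OF a] by force
qed

lemma notboth:
  assumes a: "a \<in> carrier G" and b: "b \<in> carrier G" and t: "\<tau> \<in> carrier G" "\<tau> \<otimes> \<tau> \<noteq> \<one>"
    and nb: "b \<notin> generate G {a}" and aa: "a \<otimes> a \<in> generate G {b}" and tH: "\<tau> \<in> generate G {a, b}"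
  shows "b \<otimes> b \<noteq> \<one>"
proof
  assume bb: "b \<otimes> b = \<one>"
  hence "a \<otimes> a \<in> {\<one>, b}" using gen_order2[OF b] aa by blast
  moreover have "a \<otimes> a \<noteq> b" using nb gen_sqmem[OF a] by auto
  ultimately have "a \<otimes> a = \<one>" by simp
  thus False using gen_sq[OF a b _ bb tH] t by simp
qed

lemma caseD1:
  assumes fin: "finite (carrier G)" and a: "a \<in> carrier G" and b: "b \<in> carrier G"
    and t: "\<tau> \<in> carrier G" "\<tau> \<otimes> \<tau> \<noteq> \<one>"
    and na: "a \<notin> generate G {b}" and nb: "b \<notin> generate G {a}"
    and aa: "a \<otimes> a \<in> generate G {b}" and bb: "b \<otimes> b \<in> generate G {a}"
    and tH: "\<tau> \<in> generate G {a, b}" and ta: "\<tau> \<in> generate G {a}"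
  shows "\<exists>\<chi>. character G \<chi> \<and> \<chi> \<tau> \<noteq> 1 \<and> \<chi> a \<noteq> -1 \<and> \<chi> b \<noteq> -1"
proof -
  have tH': "\<tau> \<in> generate G {b, a}" using tH by (simp add: insert_commute)
  have nbb: "b \<otimes> b \<noteq> \<one>" using notboth[OF a b t nb aa tH] .
  have naa: "a \<otimes> a \<noteq> \<one>" using notboth[OF b a t na bb tH'] .
  obtain \<chi> where chi: "character G \<chi>" "\<forall>x\<in>generate G {a}. \<chi> x = 1 \<longrightarrow> x = \<one>"
    using faithful[OF fin a] by blast
  have "\<tau> \<noteq> \<one>" using t by auto
  hence "\<chi> \<tau> \<noteq> 1" using chi ta by blast
  moreover have "\<chi> a \<noteq> -1"
  proof
    assume "\<chi> a = -1"
    hence "\<chi> (a \<otimes> a) = 1" using char_mult[OF chi(1) a a] by simp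
    thus False using chi(2) gen_sqmem[OF a] naa by blast
  qed
  moreover have "\<chi> b \<noteq> -1"
  proof
    assume "\<chi> b = -1"
    hence "\<chi> (b \<otimes> b) = 1" using char_mult[OF chi(1) b b] by simp
    thus False using chi(2) bb nbb by blast
  qed
  ultimately show ?thesis using chi(1) by blast
qed

end


context comm_group begin

lemma caseD3:
  assumes fin: "finite (carrier G)" and a: "a \<in> carrier G" and b: "b \<in> carrier G"
    and t: "\<tau> \<in> carrier G" "\<tau> \<otimes> \<tau> \<noteq> \<one>"
    and na: "a \<notin> generate G {b}" and nb: "b \<notin> generate G {a}"
    and aa: "a \<otimes> a \<in> generate G {b}" and bb: "b \<otimes> b \<in> generate G {a}"
    and tH: "\<tau> \<in> generate G {a, b}" and tb: "\<tau> \<notin> generate G {b}"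
  shows "\<exists>\<chi>. character G \<chi> \<and> \<chi> \<tau> \<noteq> 1 \<and> \<chi> a \<noteq> -1 \<and> \<chi> b \<noteq> -1"
proof -
  define B where "B = generate G {b}"
  have BS: "subgroup B G" using gen_sub[OF b] by (simp add: B_def)
  have BC: "\<And>k. k \<in> B \<Longrightarrow> k \<in> carrier G" using BS subgroup.subset by auto
  have tH': "\<tau> \<in> generate G {b, a}" using tH by (simp add: insert_commute)
  have nbb: "b \<otimes> b \<noteq> \<one>" using notboth[OF a b t nb aa tH] .
  have naa: "a \<otimes> a \<noteq> \<one>" using notboth[OF b a t na bb tH'] .
  have naB: "a \<notin> B" using na by (simp add: B_def)
  have a2: "a [^] (2::nat) \<in> B" using aa sq_pow[OF a] by (simp add: B_def)
  define m where "m = (LEAST j::nat. 0 < j \<and> a [^] j \<in> B)"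
  note mp = Kext_props[OF BS a naB fin, folded m_def]
  have "m \<le> 2" unfolding m_def by (rule Least_le) (use a2 in simp)
  hence m2: "m = 2" using mp(1) mp(4) by linarith
  have "generate G {a, b} \<subseteq> Kext G B a 2"
  proof (rule generate_subgroup_incl)
    show "subgroup (Kext G B a 2) G" using Kext_subgroup[OF BS a _ a2] by simp
    have "a = \<one> \<otimes> a [^] (1::nat)" using a by simp
    moreover have "b = b \<otimes> a [^] (0::nat)" using b by simp
    ultimately show "{a, b} \<subseteq> Kext G B a 2" unfolding Kext_def using subgroup.one_closed[OF BS] gen_mem[OF b]
      unfolding B_def by fastforce
  qed
  with tH obtain k j where kj: "\<tau> = k \<otimes> a [^] j" "k \<in> B" "j < (2::nat)" unfolding Kext_def by blast
  have "j \<noteq> 0"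
  proof
    assume "j = 0"
    hence "\<tau> = k" using kj BC by simp
    thus False using kj(2) tb by (simp add: B_def)
  qed
  hence j1: "j = 1" using kj by simp
  have tk: "\<tau> = k \<otimes> a" using kj j1 a by simp
  obtain \<chi>0 where chi0: "character G \<chi>0" "\<forall>x\<in>B. \<chi>0 x = 1 \<longrightarrow> x = \<one>"
    using faithful[OF fin b] unfolding B_def by blast
  have psi: "char_on G B \<chi>0" using chi0(1) BC by (simp add: character_def char_on_def)
  obtain w0 where w0: "w0 ^ 2 = \<chi>0 (a [^] (2::nat))" using complex_root_exists[of 2] by auto
  have b1: "\<chi>0 b \<noteq> -1"
  proof
    assume "\<chi>0 b = -1"
    hence "\<chi>0 (b \<otimes> b) = 1" using char_mult[OF chi0(1) b b] by simp
    moreover have "b \<otimes> b \<in> B" using gen_sqmem[OF b] by (simp add: B_def)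
    ultimately show False using chi0(2) nbb by blast
  qed
  define w where "w = (if w0 \<noteq> -1 \<and> \<chi>0 k * w0 \<noteq> 1 then w0 else -w0)"
  have ww: "w \<noteq> -1 \<and> \<chi>0 k * w \<noteq> 1"
  proof (cases "\<chi>0 k = 1")
    case True
    hence "k = \<one>" using chi0(2) kj(2) by blast
    have "\<chi>0 (a [^] (2::nat)) \<noteq> 1" using chi0(2) a2 naa sq_pow[OF a] by auto
    hence "w0 \<noteq> 1 \<and> w0 \<noteq> -1" using w0 by auto
    thus ?thesis using True by (simp add: w_def)
  next
    case False
    thus ?thesis unfolding w_def by auto
  qed
  have w2: "w ^ m = \<chi>0 (a [^] m)" using w0 m2 by (simp add: w_def)
  obtain \<chi> where chi: "character G \<chi>" "\<forall>k\<in>B. \<forall>j < m. \<chi> (k \<otimes> a [^] j) = \<chi>0 k * w ^ j"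
      "\<forall>k\<in>B. \<chi> k = \<chi>0 k" "\<chi> a = w"
    using ext_value[OF fin BS psi a naB, of w] w2 unfolding m_def by blast
  have "(1::nat) < m" using m2 by simp
  hence "\<chi> (k \<otimes> a [^] (1::nat)) = \<chi>0 k * w ^ (1::nat)" using chi(2) kj(2) by blast
  hence "\<chi> \<tau> = \<chi>0 k * w" using tk a by simp
  moreover have "\<chi> b = \<chi>0 b" using chi(3) gen_mem[OF b] by (simp add: B_def)
  ultimately show ?thesis using chi(1) chi(4) ww b1 by auto
qed

lemma claimC:
  assumes fin: "finite (carrier G)" and a: "a \<in> carrier G" and b: "b \<in> carrier G"
    and t: "\<tau> \<in> carrier G" "\<tau> \<otimes> \<tau> \<noteq> \<one>"
    and na: "a \<notin> generate G {b}" and nb: "b \<notin> generate G {a}"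
    and tH: "\<tau> \<in> generate G {a, b}"
  shows "\<exists>\<chi>. character G \<chi> \<and> \<chi> \<tau> \<noteq> 1 \<and> (a \<otimes> a \<in> generate G {b} \<longrightarrow> \<chi> a \<noteq> -1)
           \<and> (b \<otimes> b \<in> generate G {a} \<longrightarrow> \<chi> b \<noteq> -1)"
proof (cases "a \<otimes> a \<in> generate G {b} \<and> b \<otimes> b \<in> generate G {a}")
  case True
  hence aa: "a \<otimes> a \<in> generate G {b}" and bb: "b \<otimes> b \<in> generate G {a}" by auto
  have tH': "\<tau> \<in> generate G {b, a}" using tH by (simp add: insert_commute)
  show ?thesis
  proof (cases "\<tau> \<in> generate G {a}")
    case True
    then show ?thesis using caseD1[OF fin a b t na nb aa bb tH] by blast
  next
    case False
    show ?thesis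
    proof (cases "\<tau> \<in> generate G {b}")
      case True
      then show ?thesis using caseD1[OF fin b a t nb na bb aa tH'] by blast
    next
      case False
      then show ?thesis using caseD3[OF fin a b t na nb aa bb tH] by blast
    qed
  qed
next
  case False
  show ?thesis
  proof (cases "a \<otimes> a \<in> generate G {b}")
    case True
    then show ?thesis using False half[OF fin a t] by blast
  next
    case F2: False
    then show ?thesis using half[OF fin b t] by blast
  qed
qed

end


theorem lemma4p13:
  fixes G (structure) and \<sigma>1 \<sigma>2 \<tau> :: 'a
  assumes "comm_group G" and "finite (carrier G)"
    and "\<sigma>1 \<in> carrier G" and "\<sigma>2 \<in> carrier G" and "\<tau> \<in> carrier G"
    and "\<sigma>1 \<noteq> \<one>" and "\<sigma>2 \<noteq> \<one>" and "\<tau> \<noteq> \<one>"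
    and "group.ord G \<tau> > 2"
    and "\<tau> \<in> generate G {\<sigma>1, \<sigma>2}"
  shows "(group_rank G (generate G {\<sigma>1, \<sigma>2}) = 2 \<longrightarrow>
           (\<exists>\<phi>1 \<phi>2 \<chi>. character G \<phi>1 \<and> character G \<phi>2 \<and> character G \<chi> \<and>
              \<chi> \<tau> \<noteq> 1 \<and>
              \<phi>1 \<sigma>1 \<noteq> 1 \<and> \<phi>2 \<sigma>2 \<noteq> 1 \<and> \<phi>1 \<sigma>2 = 1 \<and> \<phi>2 \<sigma>1 = 1 \<and>
              \<phi>1 \<sigma>1 * \<chi> \<sigma>1 \<noteq> 1 \<and> \<phi>2 \<sigma>2 * cnj (\<chi> \<sigma>2) \<noteq> 1))
       \<and> (group_rank G (generate G {\<sigma>1, \<sigma>2}) = 1 \<longrightarrow>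
           (\<exists>\<phi> \<chi>. character G \<phi> \<and> character G \<chi> \<and>
              \<chi> \<tau> \<noteq> 1 \<and>
              \<phi> \<sigma>1 \<noteq> 1 \<and> \<phi> \<sigma>2 \<noteq> 1 \<and>
              \<phi> \<sigma>1 * \<chi> \<sigma>1 \<noteq> 1 \<and> \<phi> \<sigma>2 * \<chi> \<sigma>2 \<noteq> 1))"
proof -
  interpret comm_group G by fact
  note fin = assms(2) and s1 = assms(3) and s2 = assms(4) and t = assms(5)
  define H where "H = generate G {\<sigma>1, \<sigma>2}"
  have tH: "\<tau> \<in> H" using assms(10) by (simp add: H_def)
  have HS: "subgroup H G" unfolding H_def using s1 s2 by (simp add: generate_is_subgroup)
  have s1H: "\<sigma>1 \<in> H" and s2H: "\<sigma>2 \<in> H" unfolding H_def by (simp_all add: generate.incl)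
  have tt: "\<tau> \<otimes> \<tau> \<noteq> \<one>"
  proof
    assume "\<tau> \<otimes> \<tau> = \<one>"
    hence "\<tau> [^] (2::nat) = \<one>" using sq_pow[OF t] by simp
    hence "ord \<tau> dvd 2" using pow_eq_id[OF t] by simp
    hence "ord \<tau> \<le> 2" by (simp add: dvd_imp_le)
    thus False using assms(9) by simp
  qed
  define P where "P n \<longleftrightarrow> (\<exists>S. S \<subseteq> H \<and> finite S \<and> card S = n \<and> generate G S = H)" for n
  have rank: "group_rank G H = (LEAST n. P n)" by (simp add: group_rank_def P_def)
  have exP: "P (card {\<sigma>1, \<sigma>2})" unfolding P_def using s1H s2H by (intro exI[of _ "{\<sigma>1, \<sigma>2}"]) (auto simp: H_def)
  show ?thesis
  proof (intro conjI impI)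
    assume r2: "group_rank G (generate G {\<sigma>1, \<sigma>2}) = 2"
    have ncyc: "x \<notin> generate G {y}" if x: "x \<in> carrier G" and y: "y \<in> carrier G" and xy: "{x, y} = {\<sigma>1, \<sigma>2}" for x y
    proof
      assume xin: "x \<in> generate G {y}"
      have "H \<subseteq> generate G {y}"
      proof -
        have "{x, y} \<subseteq> generate G {y}" using xin gen_mem[OF y] by blast
        hence "generate G {x, y} \<subseteq> generate G {y}" using generate_subgroup_incl[OF _ gen_sub[OF y]] by blast
        thus ?thesis using xy by (simp add: H_def)
      qed
      moreover have "generate G {y} \<subseteq> H" unfolding H_def using xy mono_generate[of "{y}" "{x, y}"] by auto
      moreover have "y \<in> H" using xy s1H s2H by auto
      ultimately have "P 1" unfolding P_def by (intro exI[of _ "{y}"]) auto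
      hence "group_rank G H \<le> 1" unfolding rank by (rule Least_le)
      thus False using r2 by (simp add: H_def)
    qed
    have n1: "\<sigma>1 \<notin> generate G {\<sigma>2}" using ncyc[OF s1 s2] by simp
    have n2: "\<sigma>2 \<notin> generate G {\<sigma>1}" using ncyc[OF s2 s1] by auto
    obtain \<chi> where chi: "character G \<chi>" "\<chi> \<tau> \<noteq> 1"
      "\<sigma>1 \<otimes> \<sigma>1 \<in> generate G {\<sigma>2} \<longrightarrow> \<chi> \<sigma>1 \<noteq> -1" "\<sigma>2 \<otimes> \<sigma>2 \<in> generate G {\<sigma>1} \<longrightarrow> \<chi> \<sigma>2 \<noteq> -1"
      using claimC[OF fin s1 s2 t tt n1 n2 assms(10)] by blast
    have c1: "\<chi> \<sigma>1 \<noteq> 0" "\<chi> \<sigma>2 \<noteq> 0" using char_nz[OF chi(1)] s1 s2 by auto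
    obtain \<phi>1 where p1: "character G \<phi>1" "\<forall>x\<in>generate G {\<sigma>2}. \<phi>1 x = 1" "\<phi>1 \<sigma>1 \<noteq> 1" "\<phi>1 \<sigma>1 \<noteq> 1 / \<chi> \<sigma>1"
    proof -
      have inv1: "1 / \<chi> \<sigma>1 \<noteq> -1" if "\<chi> \<sigma>1 \<noteq> -1"
      proof
        assume "1 / \<chi> \<sigma>1 = -1"
        have "\<chi> \<sigma>1 = 1 / (1 / \<chi> \<sigma>1)" by simp
        also have "\<dots> = -1" using \<open>1 / \<chi> \<sigma>1 = -1\<close> by simp
        finally show False using that by simp
      qed
      have "\<sigma>1 \<otimes> \<sigma>1 \<in> generate G {\<sigma>2} \<Longrightarrow> 1 / \<chi> \<sigma>1 \<noteq> -1" using chi(3) inv1 by blast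
      thus ?thesis using phi_exists[OF fin gen_sub[OF s2] s1 n1, of "1 / \<chi> \<sigma>1"] that by blast
    qed
    obtain \<phi>2 where p2: "character G \<phi>2" "\<forall>x\<in>generate G {\<sigma>1}. \<phi>2 x = 1" "\<phi>2 \<sigma>2 \<noteq> 1" "\<phi>2 \<sigma>2 \<noteq> \<chi> \<sigma>2"
      using phi_exists[OF fin gen_sub[OF s1] s2 n2, of "\<chi> \<sigma>2"] chi(4) by blast
    have "\<phi>1 \<sigma>1 * \<chi> \<sigma>1 \<noteq> 1" using p1(4) c1 by (metis nonzero_eq_divide_eq mult.commute)
    moreover have "\<phi>2 \<sigma>2 * cnj (\<chi> \<sigma>2) \<noteq> 1" unfolding char_cnj[OF fin chi(1) s2] using p2(4) c1 by (simp add: divide_eq_1_iff)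
    moreover have "\<phi>1 \<sigma>2 = 1" using p1(2) gen_mem[OF s2] by blast
    moreover have "\<phi>2 \<sigma>1 = 1" using p2(2) gen_mem[OF s1] by blast
    ultimately show "\<exists>\<phi>1 \<phi>2 \<chi>. character G \<phi>1 \<and> character G \<phi>2 \<and> character G \<chi> \<and>
              \<chi> \<tau> \<noteq> 1 \<and>
              \<phi>1 \<sigma>1 \<noteq> 1 \<and> \<phi>2 \<sigma>2 \<noteq> 1 \<and> \<phi>1 \<sigma>2 = 1 \<and> \<phi>2 \<sigma>1 = 1 \<and>
              \<phi>1 \<sigma>1 * \<chi> \<sigma>1 \<noteq> 1 \<and> \<phi>2 \<sigma>2 * cnj (\<chi> \<sigma>2) \<noteq> 1"
      apply -
      apply (rule exI[of _ \<phi>1], rule exI[of _ \<phi>2], rule exI[of _ \<chi>])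
      using p1(1,3) p2(1,3) chi(1,2) by simp
  next
    assume r1: "group_rank G (generate G {\<sigma>1, \<sigma>2}) = 1"
    have "P 1" using LeastI[of P, OF exP] r1 rank by (simp add: H_def)
    then obtain S where S: "S \<subseteq> H" "card S = 1" "generate G S = H" unfolding P_def by blast
    then obtain g where g: "S = {g}" by (meson card_1_singletonE)
    have gC: "g \<in> carrier G" using S(1) g HS subgroup.subset by blast
    obtain \<psi> where psi: "character G \<psi>" "\<forall>x\<in>H. \<psi> x = 1 \<longrightarrow> x = \<one>"
    proof -
      have "generate G {g} = H" using S(3) g by simp
      thus ?thesis using faithful[OF fin gC] that by metis
    qed
    have ps1: "\<psi> \<sigma>1 \<noteq> 1" "\<psi> \<sigma>2 \<noteq> 1" using psi(2) s1H s2H assms(6,7) by blast+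
    have nz: "\<psi> \<sigma>1 \<noteq> 0" "\<psi> \<sigma>2 \<noteq> 0" using char_nz[OF psi(1) s1] char_nz[OF psi(1) s2] by blast+
    have "\<tau> \<otimes> \<tau> \<in> H" using subgroup.m_closed[OF HS tH tH] .
    hence "\<psi> (\<tau> \<otimes> \<tau>) \<noteq> 1" using psi(2) tt by blast
    hence ct: "\<psi> \<tau> * \<psi> \<tau> \<noteq> 1" using char_mult[OF psi(1) t t] by simp
    show "\<exists>\<phi> \<chi>. character G \<phi> \<and> character G \<chi> \<and>
              \<chi> \<tau> \<noteq> 1 \<and>
              \<phi> \<sigma>1 \<noteq> 1 \<and> \<phi> \<sigma>2 \<noteq> 1 \<and>
              \<phi> \<sigma>1 * \<chi> \<sigma>1 \<noteq> 1 \<and> \<phi> \<sigma>2 * \<chi> \<sigma>2 \<noteq> 1"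
    proof -
      have i1: "character G (\<lambda>x. 1 / \<psi> x)" using char_inverse[OF psi(1)] .
      have i2: "character G (\<lambda>x. \<psi> x * \<psi> x)" using char_square[OF psi(1)] .
      have i3: "1 / \<psi> \<sigma>1 \<noteq> 1" "1 / \<psi> \<sigma>2 \<noteq> 1" using ps1 by (simp_all add: divide_eq_1_iff)
      have "1 / \<psi> \<sigma>1 * (\<psi> \<sigma>1 * \<psi> \<sigma>1) = \<psi> \<sigma>1" using nz by simp
      hence i4: "1 / \<psi> \<sigma>1 * (\<psi> \<sigma>1 * \<psi> \<sigma>1) \<noteq> 1" using ps1 by simp
      have "1 / \<psi> \<sigma>2 * (\<psi> \<sigma>2 * \<psi> \<sigma>2) = \<psi> \<sigma>2" using nz by simp
      hence i5: "1 / \<psi> \<sigma>2 * (\<psi> \<sigma>2 * \<psi> \<sigma>2) \<noteq> 1" using ps1 by simp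
      show ?thesis
        apply (rule exI[of _ "\<lambda>x. 1 / \<psi> x"], rule exI[of _ "\<lambda>x. \<psi> x * \<psi> x"])
        using i1 i2 i3 i4 i5 ct by (simp only: simp_thms)
    qed
  qed
qed

end
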